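(* Let $\Phi$ be an Orlicz function and $p$ a lattice norm on $\mathbb{R}^2$ with $p((1,0))=1$. Then the functional $$\|x\|_{\Phi,p}=\inf_{k>0}\frac1k\,p\big((1,I_\Phi(kx))\big),\qquad x\in L^\Phi(\mu),$$ is a norm on $L^\Phi(\mu)$.
   Context: $(\Omega,\Sigma,\mu)$ is a $\sigma$-finite complete measure space and $L^0$ denotes the space of (classes of $\mu$-a.e. equal) real-valued $\Sigma$-measurable functions on $\Omega$. An Orlicz function is a function $\Phi:\mathbb{R}\to[0,\infty)$ which is convex, even, vanishes at $0$ and is not identically zero. For $x\in L^0$, $I_\Phi(x)=\int_\Omega\Phi(x(t))\,d\mu\in[0,+\infty]$. The Orlicz space is $L^\Phi(\mu)=\{x\in L^0: I_\Phi(\lambda x)<\infty\text{ for some }\lambda>0\}$. A lattice norm on $\mathbb{R}^2$ is a norm $p$ such that $p((u,v))\le p((u',v'))$ whenever $|u|\le|u'|$, $|v|\le|v'|$. In the formula for $\|x\|_{\Phi,p}$ the convention $p((1,+\infty))=+\infty$ is used. *)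

theory Defs
  imports "HOL-Analysis.Analysis"
begin

definition orlicz_function :: "(real \<Rightarrow> real) \<Rightarrow> bool" where
  "orlicz_function \<Phi> \<longleftrightarrow> convex_on UNIV \<Phi> \<and> (\<forall>u. \<Phi> (- u) = \<Phi> u) \<and> \<Phi> 0 = 0
     \<and> (\<forall>u. 0 \<le> \<Phi> u) \<and> (\<exists>u. \<Phi> u \<noteq> 0)"

definition orlicz_modular :: "'a measure \<Rightarrow> (real \<Rightarrow> real) \<Rightarrow> ('a \<Rightarrow> real) \<Rightarrow> ennreal" where
  "orlicz_modular M \<Phi> x = (\<integral>\<^sup>+ t. ennreal (\<Phi> (x t)) \<partial>M)"

definition orlicz_space :: "'a measure \<Rightarrow> (real \<Rightarrow> real) \<Rightarrow> ('a \<Rightarrow> real) set" where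
  "orlicz_space M \<Phi> = {x \<in> borel_measurable M. \<exists>l>0. orlicz_modular M \<Phi> (\<lambda>t. l * x t) < \<infinity>}"

definition lattice_norm_R2 :: "(real \<times> real \<Rightarrow> real) \<Rightarrow> bool" where
  "lattice_norm_R2 p \<longleftrightarrow>
     (\<forall>v. p v = 0 \<longleftrightarrow> v = (0, 0)) \<and>
     (\<forall>c u v. p (c * u, c * v) = \<bar>c\<bar> * p (u, v)) \<and>
     (\<forall>u v u' v'. p (u + u', v + v') \<le> p (u, v) + p (u', v')) \<and>
     (\<forall>u v u' v'. \<bar>u\<bar> \<le> \<bar>u'\<bar> \<longrightarrow> \<bar>v\<bar> \<le> \<bar>v'\<bar> \<longrightarrow> p (u, v) \<le> p (u', v'))"

definition p_ext :: "(real \<times> real \<Rightarrow> real) \<Rightarrow> ennreal \<Rightarrow> ennreal" where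
  "p_ext p s = (if s = \<infinity> then \<infinity> else ennreal (p (1, enn2real s)))"

definition orlicz_p_norm :: "'a measure \<Rightarrow> (real \<Rightarrow> real) \<Rightarrow> (real \<times> real \<Rightarrow> real) \<Rightarrow> ('a \<Rightarrow> real) \<Rightarrow> ennreal" where
  "orlicz_p_norm M \<Phi> p x =
     (INF k\<in>{0<..}. ennreal (1 / k) * p_ext p (orlicz_modular M \<Phi> (\<lambda>t. k * x t)))"

end

theory Submission
  imports Defs
begin


lemma p_nonneg:
  assumes "lattice_norm_R2 p" shows "0 \<le> p v"
proof -
  obtain u w where v: "v = (u, w)" by (cases v)
  have z: "p (0,0) = 0" using assms unfolding lattice_norm_R2_def by blast
  have "p (u + - u, w + - w) \<le> p (u, w) + p (- u, - w)"
    using assms unfolding lattice_norm_R2_def by blast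
  moreover have "p (- u, - w) = p (u, w)"
    using assms unfolding lattice_norm_R2_def
    by (metis abs_minus_cancel abs_one mult_1 mult_minus_left)
  ultimately show ?thesis using z v by simp
qed

lemma p_mono2:
  assumes "lattice_norm_R2 p" "0 \<le> s" "s \<le> s'" shows "p (1, s) \<le> p (1, s')"
  using assms unfolding lattice_norm_R2_def by auto

lemma p_ge_lin:
  assumes "lattice_norm_R2 p" "0 \<le> s" shows "s * p (0, 1) \<le> p (1, s)"
proof -
  have "p (s * 0, s * 1) = \<bar>s\<bar> * p (0, 1)" using assms unfolding lattice_norm_R2_def by blast
  moreover have "p (s * 0, s * 1) \<le> p (1, s)" using assms unfolding lattice_norm_R2_def by auto
  ultimately show ?thesis using assms by simp
qed

lemma p01_pos: assumes "lattice_norm_R2 p" shows "0 < p (0, 1)"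
proof -
  have "p (0,1) \<noteq> 0" using assms unfolding lattice_norm_R2_def by auto
  thus ?thesis using p_nonneg[OF assms, of "(0,1)"] by simp
qed

lemma p_convex:
  assumes "lattice_norm_R2 p" "0 \<le> a" "0 \<le> b" "a + b = 1"
  shows "p (1, a * r1 + b * r2) \<le> a * p (1, r1) + b * p (1, r2)"
proof -
  have "p (a * 1 + b * 1, a * r1 + b * r2) \<le> p (a * 1, a * r1) + p (b * 1, b * r2)"
    using assms unfolding lattice_norm_R2_def by blast
  moreover have "p (a * 1, a * r1) = a * p (1, r1)" "p (b * 1, b * r2) = b * p (1, r2)"
    using assms unfolding lattice_norm_R2_def by (metis abs_of_nonneg)+
  ultimately show ?thesis using assms by simp
qed

lemma p_ext_ge1:
  assumes "lattice_norm_R2 p" "p (1,0) = 1" shows "1 \<le> p_ext p s"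
proof (cases "s = \<infinity>")
  case False
  have "1 \<le> p (1, enn2real s)" using p_mono2[OF assms(1), of 0 "enn2real s"] assms(2) by simp
  thus ?thesis using False unfolding p_ext_def by simp
qed (simp add: p_ext_def)

lemma p_ext_ge_lin:
  assumes "lattice_norm_R2 p" shows "s * ennreal (p (0,1)) \<le> p_ext p s"
proof (cases "s = \<infinity>")
  case False
  then obtain r where r: "s = ennreal r" "0 \<le> r" by (cases s rule: ennreal_cases) auto
  have "r * p (0,1) \<le> p (1, r)" using p_ge_lin[OF assms r(2)] .
  hence "ennreal (r * p (0,1)) \<le> ennreal (p (1, r))" by (rule ennreal_leI)
  thus ?thesis using r p01_pos[OF assms] unfolding p_ext_def by (simp add: ennreal_mult)
qed (simp add: p_ext_def)

lemma Phi_cont: assumes "orlicz_function \<Phi>" shows "continuous_on UNIV \<Phi>"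
  using assms convex_on_continuous[of UNIV \<Phi>] unfolding orlicz_function_def by auto

lemma Phi_meas: assumes "orlicz_function \<Phi>" "f \<in> borel_measurable M"
  shows "(\<lambda>t. \<Phi> (f t)) \<in> borel_measurable M"
  using borel_measurable_continuous_on[OF Phi_cont[OF assms(1)] assms(2)] .

lemma Phi_conv: assumes "orlicz_function \<Phi>" "0 \<le> a" "0 \<le> b" "a + b = 1"
  shows "\<Phi> (a * u + b * v) \<le> a * \<Phi> u + b * \<Phi> v"
proof -
  have c: "convex_on UNIV \<Phi>" using assms unfolding orlicz_function_def by blast
  have "b \<le> 1" using assms by simp
  from convex_onD[OF c assms(3) this, of u v] have "\<Phi> ((1 - b) * u + b * v) \<le> (1 - b) * \<Phi> u + b * \<Phi> v"
    by simp
  moreover have "1 - b = a" using assms by simp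
  ultimately show ?thesis by simp
qed

lemma Phi_abs: assumes "orlicz_function \<Phi>" shows "\<Phi> \<bar>u\<bar> = \<Phi> u"
  using assms unfolding orlicz_function_def by (cases "u \<ge> 0") auto

lemma Phi_lower: assumes "orlicz_function \<Phi>"
  shows "\<exists>u0>0. \<exists>b>0. \<forall>u. u0 \<le> \<bar>u\<bar> \<longrightarrow> b * \<bar>u\<bar> \<le> \<Phi> u"
proof -
  obtain w where w: "\<Phi> w \<noteq> 0" using assms unfolding orlicz_function_def by blast
  define u0 where "u0 = \<bar>w\<bar>"
  have z: "\<Phi> 0 = 0" using assms unfolding orlicz_function_def by blast
  have "\<Phi> u0 = \<Phi> w" using Phi_abs[OF assms] u0_def by simp
  hence pos: "\<Phi> u0 > 0" using w assms unfolding orlicz_function_def by (metis less_eq_real_def)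
  have u0: "u0 > 0" using w z u0_def by (cases "w = 0") auto
  have "\<forall>u. u0 \<le> \<bar>u\<bar> \<longrightarrow> (\<Phi> u0 / u0) * \<bar>u\<bar> \<le> \<Phi> u"
  proof (intro allI impI)
    fix u assume h: "u0 \<le> \<bar>u\<bar>"
    define a where "a = u0 / \<bar>u\<bar>"
    have ua: "\<bar>u\<bar> > 0" using h u0 by linarith
    have a0: "0 \<le> a" "a \<le> 1" using h u0 ua unfolding a_def by auto
    have "\<Phi> (a * \<bar>u\<bar> + (1 - a) * 0) \<le> a * \<Phi> \<bar>u\<bar> + (1 - a) * \<Phi> 0"
      using Phi_conv[OF assms a0(1), of "1 - a" "\<bar>u\<bar>" 0] a0 by simp
    hence "\<Phi> u0 \<le> a * \<Phi> u" using z ua Phi_abs[OF assms] unfolding a_def by simp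
    hence "\<Phi> u0 / u0 * \<bar>u\<bar> \<le> a * \<Phi> u / u0 * \<bar>u\<bar>" using u0 ua
      by (simp add: divide_right_mono mult_right_mono)
    also have "\<dots> = \<Phi> u" using u0 ua unfolding a_def by simp
    finally show "(\<Phi> u0 / u0) * \<bar>u\<bar> \<le> \<Phi> u" .
  qed
  thus ?thesis using u0 pos by (intro exI[of _ u0] conjI exI[of _ "\<Phi> u0 / u0"]) auto
qed



lemma N_zero_fun:
  assumes "p (1,0) = 1" "\<And>k. orlicz_modular M \<Phi> (\<lambda>t. k * x t) = 0"
  shows "orlicz_p_norm M \<Phi> p x = 0"
proof -
  have eq: "orlicz_p_norm M \<Phi> p x = (INF k\<in>{0<..}. ennreal (1 / k))"
    unfolding orlicz_p_norm_def using assms by (simp add: p_ext_def)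
  have "(INF k\<in>{0<..}. ennreal (1 / k)) \<le> 0"
  proof (rule ennreal_le_epsilon)
    fix e :: real assume "0 < e"
    hence "(INF k\<in>{0<..}. ennreal (1 / k)) \<le> ennreal (1 / (1 / e))"
      by (intro INF_lower) auto
    thus "(INF k\<in>{0<..}. ennreal (1 / k)) \<le> 0 + ennreal e" by simp
  qed
  thus ?thesis using eq by simp
qed

lemma I_AE: assumes "AE t in M. x t = y t"
  shows "orlicz_modular M \<Phi> (\<lambda>t. k * x t) = orlicz_modular M \<Phi> (\<lambda>t. k * y t)"
  unfolding orlicz_modular_def by (rule nn_integral_cong_AE) (use assms in \<open>auto elim: eventually_mono\<close>)

lemma N_finite: assumes "x \<in> orlicz_space M \<Phi>" shows "orlicz_p_norm M \<Phi> p x < \<infinity>"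
proof -
  obtain l where l: "l > 0" "orlicz_modular M \<Phi> (\<lambda>t. l * x t) < \<infinity>"
    using assms unfolding orlicz_space_def by blast
  have "orlicz_p_norm M \<Phi> p x \<le> ennreal (1 / l) * p_ext p (orlicz_modular M \<Phi> (\<lambda>t. l * x t))"
    unfolding orlicz_p_norm_def using l by (intro INF_lower) auto
  also have "\<dots> < \<infinity>" using l unfolding p_ext_def
    by (simp add: ennreal_mult_less_top)
  finally show ?thesis .
qed

lemma N_scale_ge: assumes "a > 0"
  shows "ennreal a * orlicz_p_norm M \<Phi> p x \<le> orlicz_p_norm M \<Phi> p (\<lambda>t. a * x t)"
  unfolding orlicz_p_norm_def
proof (rule INF_greatest)
  fix k :: real assume "k \<in> {0<..}"
  hence k: "k > 0" by simp
  have e1: "ennreal (1 / k) = ennreal a * ennreal (1 / (k * a))"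
    using k assms by (simp add: ennreal_mult[symmetric])
  have e2: "(\<lambda>t. k * (a * x t)) = (\<lambda>t. (k * a) * x t)" by (simp add: ac_simps)
  have "(INF k\<in>{0<..}. ennreal (1 / k) * p_ext p (orlicz_modular M \<Phi> (\<lambda>t. k * x t)))
        \<le> ennreal (1 / (k * a)) * p_ext p (orlicz_modular M \<Phi> (\<lambda>t. (k * a) * x t))"
    using k assms by (intro INF_lower) auto
  hence "ennreal a * (INF k\<in>{0<..}. ennreal (1 / k) * p_ext p (orlicz_modular M \<Phi> (\<lambda>t. k * x t)))
        \<le> ennreal a * (ennreal (1 / (k * a)) * p_ext p (orlicz_modular M \<Phi> (\<lambda>t. (k * a) * x t)))"
    by (rule mult_left_mono) simp
  thus "ennreal a * (INF k\<in>{0<..}. ennreal (1 / k) * p_ext p (orlicz_modular M \<Phi> (\<lambda>t. k * x t)))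
        \<le> ennreal (1 / k) * p_ext p (orlicz_modular M \<Phi> (\<lambda>t. k * (a * x t)))"
    unfolding e1 e2 by (simp add: mult.assoc)
qed

lemma N_scale: assumes "a > 0"
  shows "orlicz_p_norm M \<Phi> p (\<lambda>t. a * x t) = ennreal a * orlicz_p_norm M \<Phi> p x"
proof (rule antisym)
  have "ennreal (1 / a) * orlicz_p_norm M \<Phi> p (\<lambda>t. a * x t)
        \<le> orlicz_p_norm M \<Phi> p (\<lambda>t. (1 / a) * (a * x t))"
    using assms by (intro N_scale_ge) auto
  also have "(\<lambda>t. (1 / a) * (a * x t)) = x" using assms by auto
  finally have "ennreal a * (ennreal (1 / a) * orlicz_p_norm M \<Phi> p (\<lambda>t. a * x t))
      \<le> ennreal a * orlicz_p_norm M \<Phi> p x" by (rule mult_left_mono) simp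
  moreover have "ennreal a * ennreal (1 / a) = 1" using assms by (simp add: ennreal_mult[symmetric])
  ultimately show "orlicz_p_norm M \<Phi> p (\<lambda>t. a * x t) \<le> ennreal a * orlicz_p_norm M \<Phi> p x"
    by (simp add: mult.assoc[symmetric])
qed (rule N_scale_ge[OF assms])

lemma N_abs: assumes "orlicz_function \<Phi>"
  shows "orlicz_p_norm M \<Phi> p (\<lambda>t. c * x t) = orlicz_p_norm M \<Phi> p (\<lambda>t. \<bar>c\<bar> * x t)"
proof -
  have "\<And>k t. \<Phi> (k * (c * x t)) = \<Phi> (k * (\<bar>c\<bar> * x t))"
    using assms unfolding orlicz_function_def by (cases "c \<ge> 0") auto
  thus ?thesis unfolding orlicz_p_norm_def orlicz_modular_def by simp
qed



lemma N_tri_key: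
  assumes p: "lattice_norm_R2 p" and phi: "orlicz_function \<Phi>"
    and xm: "x \<in> borel_measurable M" and ym: "y \<in> borel_measurable M"
    and k1: "k1 > 0" and k2: "k2 > 0"
  shows "orlicz_p_norm M \<Phi> p (\<lambda>t. x t + y t)
     \<le> ennreal (1 / k1) * p_ext p (orlicz_modular M \<Phi> (\<lambda>t. k1 * x t))
       + ennreal (1 / k2) * p_ext p (orlicz_modular M \<Phi> (\<lambda>t. k2 * y t))"
    (is "_ \<le> ?T1 + ?T2")
proof -
  define I1 where "I1 = orlicz_modular M \<Phi> (\<lambda>t. k1 * x t)"
  define I2 where "I2 = orlicz_modular M \<Phi> (\<lambda>t. k2 * y t)"
  show ?thesis
  proof (cases "I1 = \<infinity> \<or> I2 = \<infinity>")
    case True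
    hence "?T1 + ?T2 = \<infinity>" using k1 k2 unfolding I1_def[symmetric] I2_def[symmetric]
      by (auto simp: p_ext_def ennreal_mult_eq_top_iff)
    thus ?thesis unfolding infinity_ennreal_def by (simp only: top_greatest)
  next
    case False
    then obtain r1 r2 where r: "I1 = ennreal r1" "0 \<le> r1" "I2 = ennreal r2" "0 \<le> r2"
      by (metis ennreal_cases infinity_ennreal_def)
    define k where "k = k1 * k2 / (k1 + k2)"
    define a where "a = k2 / (k1 + k2)"
    define b where "b = k1 / (k1 + k2)"
    have k: "k > 0" using k1 k2 unfolding k_def by simp
    have kk: "k1 + k2 > 0" using k1 k2 by simp
    have ab: "0 \<le> a" "0 \<le> b" "a + b = 1" using k1 k2 kk unfolding a_def b_def
      by (auto simp: add_divide_distrib[symmetric])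
    have e: "a * k1 = k" "b * k2 = k" unfolding a_def b_def k_def by (simp_all add: mult.commute)
    have lin: "\<And>t. k * (x t + y t) = a * (k1 * x t) + b * (k2 * y t)"
      by (metis e distrib_left mult.assoc)

    have nn: "\<And>u. 0 \<le> \<Phi> u" using phi unfolding orlicz_function_def by blast
    have m1: "(\<lambda>t. ennreal (\<Phi> (k1 * x t))) \<in> borel_measurable M"
      using Phi_meas[OF phi, of "\<lambda>t. k1 * x t"] xm by simp
    have m2: "(\<lambda>t. ennreal (\<Phi> (k2 * y t))) \<in> borel_measurable M"
      using Phi_meas[OF phi, of "\<lambda>t. k2 * y t"] ym by simp
    have "orlicz_modular M \<Phi> (\<lambda>t. k * (x t + y t))
        \<le> (\<integral>\<^sup>+ t. ennreal a * ennreal (\<Phi> (k1 * x t)) + ennreal b * ennreal (\<Phi> (k2 * y t)) \<partial>M)"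
      unfolding orlicz_modular_def
    proof (rule nn_integral_mono)
      fix t
      have "\<Phi> (k * (x t + y t)) \<le> a * \<Phi> (k1 * x t) + b * \<Phi> (k2 * y t)"
        unfolding lin by (rule Phi_conv[OF phi ab])
      hence "ennreal (\<Phi> (k * (x t + y t))) \<le> ennreal (a * \<Phi> (k1 * x t) + b * \<Phi> (k2 * y t))"
        by (rule ennreal_leI)
      also have "\<dots> = ennreal a * ennreal (\<Phi> (k1 * x t)) + ennreal b * ennreal (\<Phi> (k2 * y t))"
        using ab nn by (simp add: ennreal_mult[symmetric] flip: ennreal_plus)
      finally show "ennreal (\<Phi> (k * (x t + y t))) \<le> \<dots>" .
    qed
    also have "\<dots> = ennreal a * I1 + ennreal b * I2"
      unfolding I1_def I2_def orlicz_modular_def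
      using m1 m2 by (simp add: nn_integral_add nn_integral_cmult)
    also have "\<dots> = ennreal (a * r1 + b * r2)" using r ab
      by (simp add: ennreal_mult[symmetric] flip: ennreal_plus)
    finally have Ile: "orlicz_modular M \<Phi> (\<lambda>t. k * (x t + y t)) \<le> ennreal (a * r1 + b * r2)" .
    define J where "J = orlicz_modular M \<Phi> (\<lambda>t. k * (x t + y t))"
    have Jf: "J \<noteq> \<infinity>" using Ile unfolding J_def infinity_ennreal_def
      by (rule neq_top_trans[rotated]) simp
    have nnab: "0 \<le> a * r1 + b * r2" using r ab by simp
    have Jle: "enn2real J \<le> a * r1 + b * r2"
      using enn2real_mono[OF Ile[folded J_def] ennreal_less_top] unfolding enn2real_ennreal[OF nnab] .
    have "p (1, enn2real J) \<le> p (1, a * r1 + b * r2)"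
      using p_mono2[OF p enn2real_nonneg Jle] .
    also have "\<dots> \<le> a * p (1, r1) + b * p (1, r2)" by (rule p_convex[OF p ab])
    finally have pl: "p (1, enn2real J) \<le> a * p (1, r1) + b * p (1, r2)" .
    have "orlicz_p_norm M \<Phi> p (\<lambda>t. x t + y t) \<le> ennreal (1 / k) * p_ext p J"
      unfolding orlicz_p_norm_def J_def using k by (intro INF_lower) auto
    also have "\<dots> = ennreal (1 / k * p (1, enn2real J))"
      using Jf k p_nonneg[OF p] by (simp add: p_ext_def ennreal_mult[symmetric])
    also have "\<dots> \<le> ennreal (1 / k * (a * p (1, r1) + b * p (1, r2)))"
      using pl k by (intro ennreal_leI mult_left_mono) auto
    also have "1 / k * (a * p (1, r1) + b * p (1, r2)) = 1 / k1 * p (1, r1) + 1 / k2 * p (1, r2)"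
    proof -
      have h1: "1 / k * a = 1 / k1" using e(1) k k1 by (auto simp: field_simps)
      have h2: "1 / k * b = 1 / k2" using e(2) k k2 by (auto simp: field_simps)
      show ?thesis by (simp only: distrib_left mult.assoc[symmetric] h1 h2)
    qed
    also have "ennreal \<dots> = ?T1 + ?T2"
      unfolding I1_def[symmetric] I2_def[symmetric] using r k1 k2 p_nonneg[OF p]
      by (simp add: p_ext_def ennreal_mult[symmetric] flip: ennreal_plus)
    finally show ?thesis .
  qed
qed

lemma N_tri:
  assumes p: "lattice_norm_R2 p" and phi: "orlicz_function \<Phi>"
    and xm: "x \<in> borel_measurable M" and ym: "y \<in> borel_measurable M"
  shows "orlicz_p_norm M \<Phi> p (\<lambda>t. x t + y t) \<le> orlicz_p_norm M \<Phi> p x + orlicz_p_norm M \<Phi> p y"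
proof (rule ennreal_le_epsilon)
  fix e :: real assume top: "orlicz_p_norm M \<Phi> p x + orlicz_p_norm M \<Phi> p y < top" and e: "0 < e"
  have lt: "z < z + ennreal (e / 2)" if zt: "z < top" for z :: ennreal
  proof -
    obtain r where r: "z = ennreal r" "0 \<le> r" using zt by (cases z rule: ennreal_cases) auto
    have "ennreal r + ennreal (e / 2) = ennreal (r + e / 2)" using r e by (intro ennreal_plus[symmetric]) auto
    moreover have "ennreal r < ennreal (r + e / 2)" using r e by (subst ennreal_less_iff) auto
    ultimately show ?thesis using r by simp
  qed
  have ex: "\<exists>k\<in>{0<..}. ennreal (1 / k) * p_ext p (orlicz_modular M \<Phi> (\<lambda>t. k * w t)) < orlicz_p_norm M \<Phi> p w + ennreal (e / 2)"
    if wt: "orlicz_p_norm M \<Phi> p w < top" for w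
  proof -
    have "orlicz_p_norm M \<Phi> p w < orlicz_p_norm M \<Phi> p w + ennreal (e / 2)" using lt[OF wt] .
    hence "(INF k\<in>{0<..}. ennreal (1 / k) * p_ext p (orlicz_modular M \<Phi> (\<lambda>t. k * w t))) < orlicz_p_norm M \<Phi> p w + ennreal (e / 2)"
      by (simp only: orlicz_p_norm_def)
    thus ?thesis by (simp only: INF_less_iff)
  qed
  have "orlicz_p_norm M \<Phi> p x \<le> orlicz_p_norm M \<Phi> p x + orlicz_p_norm M \<Phi> p y"
    by (rule add_increasing2[OF zero_le order_refl])
  hence "orlicz_p_norm M \<Phi> p x < top" using top by (rule le_less_trans)
  from ex[OF this] obtain k1 where k1: "k1 > 0"
    "ennreal (1 / k1) * p_ext p (orlicz_modular M \<Phi> (\<lambda>t. k1 * x t)) < orlicz_p_norm M \<Phi> p x + ennreal (e / 2)"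
    by auto
  have "orlicz_p_norm M \<Phi> p y \<le> orlicz_p_norm M \<Phi> p x + orlicz_p_norm M \<Phi> p y"
    by (rule add_increasing[OF zero_le order_refl])
  hence "orlicz_p_norm M \<Phi> p y < top" using top by (rule le_less_trans)
  from ex[OF this] obtain k2 where k2: "k2 > 0"
    "ennreal (1 / k2) * p_ext p (orlicz_modular M \<Phi> (\<lambda>t. k2 * y t)) < orlicz_p_norm M \<Phi> p y + ennreal (e / 2)"
    by auto
  have "orlicz_p_norm M \<Phi> p (\<lambda>t. x t + y t)
     \<le> ennreal (1 / k1) * p_ext p (orlicz_modular M \<Phi> (\<lambda>t. k1 * x t))
       + ennreal (1 / k2) * p_ext p (orlicz_modular M \<Phi> (\<lambda>t. k2 * y t))"
    by (rule N_tri_key[OF p phi xm ym k1(1) k2(1)])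
  also have "\<dots> \<le> (orlicz_p_norm M \<Phi> p x + ennreal (e / 2)) + (orlicz_p_norm M \<Phi> p y + ennreal (e / 2))"
    using k1(2) k2(2) by (intro add_mono less_imp_le)
  also have "\<dots> = orlicz_p_norm M \<Phi> p x + orlicz_p_norm M \<Phi> p y + (ennreal (e / 2) + ennreal (e / 2))"
    by (simp only: ac_simps)
  also have "ennreal (e / 2) + ennreal (e / 2) = ennreal e"
    using e by (subst ennreal_plus[symmetric]) auto
  finally show "orlicz_p_norm M \<Phi> p (\<lambda>t. x t + y t) \<le> orlicz_p_norm M \<Phi> p x + orlicz_p_norm M \<Phi> p y + ennreal e" .
qed



lemma N_zero_imp:
  assumes p: "lattice_norm_R2 p" and p1: "p (1,0) = 1" and phi: "orlicz_function \<Phi>"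
    and xm: "x \<in> borel_measurable M" and N0: "orlicz_p_norm M \<Phi> p x = 0"
  shows "AE t in M. x t = 0"
proof (rule ccontr)
  assume nAE: "\<not> (AE t in M. x t = 0)"
  define S where "S n = {t \<in> space M. inverse (real (Suc n)) \<le> \<bar>x t\<bar>}" for n
  have "\<exists>n. S n \<notin> null_sets M"
  proof (rule ccontr)
    assume "\<not> (\<exists>n. S n \<notin> null_sets M)"
    hence "(\<Union>n. S n) \<in> null_sets M" by (intro null_sets_UN) auto
    moreover have "{t \<in> space M. \<not> x t = 0} \<subseteq> (\<Union>n. S n)"
    proof
      fix t assume "t \<in> {t \<in> space M. \<not> x t = 0}"
      hence t: "t \<in> space M" "0 < \<bar>x t\<bar>" by auto
      then obtain n where "inverse (real (Suc n)) < \<bar>x t\<bar>" using reals_Archimedean[OF t(2)] by blast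
      thus "t \<in> (\<Union>n. S n)" using t unfolding S_def by (auto intro!: exI[of _ n] less_imp_le)
    qed
    ultimately have "AE t in M. x t = 0" by (rule AE_I')
    thus False using nAE by simp
  qed
  then obtain n where nS: "S n \<notin> null_sets M" by blast
  define \<epsilon> where "\<epsilon> = inverse (real (Suc n))"
  define A where "A = S n"
  have eps: "\<epsilon> > 0" unfolding \<epsilon>_def by simp
  have Am: "A \<in> sets M" unfolding A_def S_def using xm by measurable
  define m where "m = emeasure M A"
  have m0: "m \<noteq> 0" using nS Am unfolding m_def A_def by (simp add: null_sets_def)
  obtain u0 b where u0: "u0 > 0" and b: "b > 0" and low: "\<And>u. u0 \<le> \<bar>u\<bar> \<Longrightarrow> b * \<bar>u\<bar> \<le> \<Phi> u"
    using Phi_lower[OF phi] by blast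
  define c0 where "c0 = p (0, 1)"
  have c0: "c0 > 0" unfolding c0_def using p01_pos[OF p] .
  define K where "K = u0 / \<epsilon>"
  have K: "K > 0" unfolding K_def using u0 eps by simp
  define \<delta> where "\<delta> = min (ennreal (1 / K)) (ennreal (b * \<epsilon> * c0) * m)"
  have \<delta>pos: "\<delta> > 0" unfolding \<delta>_def using K b eps c0 m0
    by (auto simp: ennreal_zero_less_mult_iff zero_less_iff_neq_zero)
  have "\<delta> \<le> orlicz_p_norm M \<Phi> p x"
    unfolding orlicz_p_norm_def
  proof (rule INF_greatest)
    fix k :: real assume "k \<in> {0<..}"
    hence k: "k > 0" by simp
    show "\<delta> \<le> ennreal (1 / k) * p_ext p (orlicz_modular M \<Phi> (\<lambda>t. k * x t))"
    proof (cases "k < K")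
      case True
      have "\<delta> \<le> ennreal (1 / K)" unfolding \<delta>_def by simp
      also have "\<dots> \<le> ennreal (1 / k)" using True k by (intro ennreal_leI divide_left_mono) auto
      also have "\<dots> = ennreal (1 / k) * 1" by simp
      also have "\<dots> \<le> ennreal (1 / k) * p_ext p (orlicz_modular M \<Phi> (\<lambda>t. k * x t))"
        by (intro mult_left_mono p_ext_ge1[OF p p1]) simp
      finally show ?thesis .
    next
      case False
      have "ennreal (b * k * \<epsilon>) * m = (\<integral>\<^sup>+ t. ennreal (b * k * \<epsilon>) * indicator A t \<partial>M)"
        unfolding m_def using Am by (simp add: nn_integral_cmult_indicator)
      also have "\<dots> \<le> orlicz_modular M \<Phi> (\<lambda>t. k * x t)"
        unfolding orlicz_modular_def
      proof (rule nn_integral_mono)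
        fix t assume "t \<in> space M"
        show "ennreal (b * k * \<epsilon>) * indicator A t \<le> ennreal (\<Phi> (k * x t))"
        proof (cases "t \<in> A")
          case True
          hence xe: "\<epsilon> \<le> \<bar>x t\<bar>" unfolding A_def S_def \<epsilon>_def by simp
          have "k * \<epsilon> \<le> \<bar>k * x t\<bar>" using xe k by (simp add: abs_mult)
          moreover have "u0 \<le> k * \<epsilon>" using False eps unfolding K_def by (simp add: field_simps)
          ultimately have "b * \<bar>k * x t\<bar> \<le> \<Phi> (k * x t)" by (intro low) simp
          moreover have "b * (k * \<epsilon>) \<le> b * \<bar>k * x t\<bar>" using \<open>k * \<epsilon> \<le> \<bar>k * x t\<bar>\<close> b by simp
          ultimately have "b * k * \<epsilon> \<le> \<Phi> (k * x t)" by (simp add: mult.assoc)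
          thus ?thesis using True by (simp add: ennreal_leI)
        qed simp
      qed
      finally have Ige: "ennreal (b * k * \<epsilon>) * m \<le> orlicz_modular M \<Phi> (\<lambda>t. k * x t)" .
      have "\<delta> \<le> ennreal (b * \<epsilon> * c0) * m" unfolding \<delta>_def by simp
      also have "ennreal (b * \<epsilon> * c0) * m = ennreal (1 / k) * ((ennreal (b * k * \<epsilon>) * m) * ennreal c0)"
      proof -
        have "ennreal (b * \<epsilon> * c0) = ennreal (1 / k) * ennreal (b * k * \<epsilon>) * ennreal c0"
          using k b eps c0 by (simp add: ennreal_mult[symmetric])
        thus ?thesis by (simp add: ac_simps)
      qed
      also have "\<dots> \<le> ennreal (1 / k) * (orlicz_modular M \<Phi> (\<lambda>t. k * x t) * ennreal c0)"
        using Ige by (intro mult_left_mono mult_right_mono) auto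
      also have "\<dots> \<le> ennreal (1 / k) * p_ext p (orlicz_modular M \<Phi> (\<lambda>t. k * x t))"
        unfolding c0_def by (intro mult_left_mono p_ext_ge_lin[OF p]) simp
      finally show ?thesis .
    qed
  qed
  thus False using N0 \<delta>pos by simp
qed



theorem theorem2:
  fixes M :: "'a measure" and \<Phi> :: "real \<Rightarrow> real" and p :: "real \<times> real \<Rightarrow> real"
  assumes "sigma_finite_measure M" and "complete_measure M"
    and "orlicz_function \<Phi>"
    and "lattice_norm_R2 p" and "p (1, 0) = 1"
  shows
    "(\<forall>x\<in>orlicz_space M \<Phi>. \<forall>y\<in>orlicz_space M \<Phi>. (AE t in M. x t = y t) \<longrightarrow>
        orlicz_p_norm M \<Phi> p x = orlicz_p_norm M \<Phi> p y)
   \<and> (\<forall>x\<in>orlicz_space M \<Phi>. orlicz_p_norm M \<Phi> p x < \<infinity>)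
   \<and> (\<forall>x\<in>orlicz_space M \<Phi>. orlicz_p_norm M \<Phi> p x = 0 \<longleftrightarrow> (AE t in M. x t = 0))
   \<and> (\<forall>x\<in>orlicz_space M \<Phi>. \<forall>c::real.
        orlicz_p_norm M \<Phi> p (\<lambda>t. c * x t) = ennreal \<bar>c\<bar> * orlicz_p_norm M \<Phi> p x)
   \<and> (\<forall>x\<in>orlicz_space M \<Phi>. \<forall>y\<in>orlicz_space M \<Phi>.
        orlicz_p_norm M \<Phi> p (\<lambda>t. x t + y t) \<le> orlicz_p_norm M \<Phi> p x + orlicz_p_norm M \<Phi> p y)"
proof (intro conjI ballI allI impI)
  note phi = assms(3) and p = assms(4) and p1 = assms(5)
  have z: "\<Phi> 0 = 0" using phi unfolding orlicz_function_def by blast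
  fix x y assume "x \<in> orlicz_space M \<Phi>" "y \<in> orlicz_space M \<Phi>" "AE t in M. x t = y t"
  thus "orlicz_p_norm M \<Phi> p x = orlicz_p_norm M \<Phi> p y"
    unfolding orlicz_p_norm_def using I_AE[of x y M] by simp
next
  fix x assume "x \<in> orlicz_space M \<Phi>"
  thus "orlicz_p_norm M \<Phi> p x < \<infinity>" by (rule N_finite)
next
  fix x assume x: "x \<in> orlicz_space M \<Phi>"
  have z: "\<Phi> 0 = 0" using assms(3) unfolding orlicz_function_def by blast
  show "orlicz_p_norm M \<Phi> p x = 0 \<longleftrightarrow> (AE t in M. x t = 0)"
  proof
    assume "orlicz_p_norm M \<Phi> p x = 0"
    thus "AE t in M. x t = 0" using N_zero_imp[OF assms(4,5,3)] x unfolding orlicz_space_def by blast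
  next
    assume ae: "AE t in M. x t = 0"
    show "orlicz_p_norm M \<Phi> p x = 0"
    proof (rule N_zero_fun[where p=p, OF assms(5)])
      fix k
      have "orlicz_modular M \<Phi> (\<lambda>t. k * x t) = orlicz_modular M \<Phi> (\<lambda>t. k * 0)"
        by (rule I_AE[OF ae])
      thus "orlicz_modular M \<Phi> (\<lambda>t. k * x t) = 0" using z by (simp add: orlicz_modular_def)
    qed
  qed
next
  fix x c assume x: "x \<in> orlicz_space M \<Phi>"
  have z: "\<Phi> 0 = 0" using assms(3) unfolding orlicz_function_def by blast
  show "orlicz_p_norm M \<Phi> p (\<lambda>t. c * x t) = ennreal \<bar>c\<bar> * orlicz_p_norm M \<Phi> p x"
  proof (cases "c = 0")
    case True
    have "orlicz_p_norm M \<Phi> p (\<lambda>t. c * x t) = 0"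
      by (rule N_zero_fun[where p=p, OF assms(5)]) (use True z in \<open>simp add: orlicz_modular_def\<close>)
    thus ?thesis using True by simp
  next
    case False
    hence "0 < \<bar>c\<bar>" by simp
    from N_abs[OF assms(3), of M p c x] N_scale[OF this, of M \<Phi> p x]
    show ?thesis by (rule trans)
  qed
next
  fix x y assume "x \<in> orlicz_space M \<Phi>" "y \<in> orlicz_space M \<Phi>"
  thus "orlicz_p_norm M \<Phi> p (\<lambda>t. x t + y t) \<le> orlicz_p_norm M \<Phi> p x + orlicz_p_norm M \<Phi> p y"
    using N_tri[OF assms(4,3)] unfolding orlicz_space_def by blast
qed

end
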